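(* For every $n\ge1$, the map $S\mapsto[\mathrm{D}(S),\mathrm{E}(S)]$ is a bijection from the set $\mathcal{S}_n$ of sticky trees with $n$ edges onto the set of intervals of the Tamari lattice of order $n$.
   Context: Sticky trees: a plane tree is a rooted tree in which the children of every node are linearly ordered (left to right). The root has depth $0$, a child of a node of depth $d$ has depth $d+1$. The prefix order is: the root, followed by the prefix order of the subtree of its leftmost child, then of its second child, and so on. $S_u$ denotes the subtree rooted at $u$. A sticky tree is a plane tree $S$ with node set $V$ and a labeling $\ell:V\to\mathbb{N}$ such that: (1) every node $u$ of depth $d$ has $0\le\ell(u)\le d$; (2) every node $u$ of depth $d>0$ has some $v\in S_u$ (possibly $v=u$) with $\ell(v)<d$; (3) for every node $u$ of depth $d$, if some $v\in S_u$ has $\ell(v)=d$, then every node of $S_u$ (including $u$) preceding $v$ in prefix order has label at least $d$. The certificate of a non-root node $u$ of depth $d$ is the first node, in prefix order, of $S_u$ whose label is $<d$. The certificate-counting function $c:V\to\mathbb{N}$ assigns to each node $w$ the number of non-root nodes whose certificate is $w$. The words: $\mathrm{E}(S)$ is the word in $\{u,d\}$ obtained by the depth-first traversal of $S$ from the root visiting children left to right, writing $u$ for each move from a node to a child and $d$ for each move back to the parent. If $v_1,\dots,v_n$ are the non-root nodes of $S$ in prefix order, $\mathrm{D}(S)=u\,d^{c(v_1)}\,u\,d^{c(v_2)}\cdots u\,d^{c(v_n)}$. Dyck paths and Tamari lattice: a Dyck path of length $2n$ is a word in $\{u,d\}$ with $n$ letters $u$ and $n$ letters $d$ such that every prefix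 has at least as many $u$'s as $d$'s. The $i$-th letter $u$ of a Dyck path $D$ is matched with the letter $d$ following it such that the factor strictly between them is balanced; $\ell_D(i)$ is the length of that factor. $D\preceq_T E$ iff $\ell_D(i)\le\ell_E(i)$ for all $1\le i\le n$ (Tamari lattice of order $n$); a Tamari interval is a pair $[D,E]$ of Dyck paths of length $2n$ with $D\preceq_T E$. *)

theory Defs
  imports "HOL-Library.Sublist"
begin

datatype ltree = LNode nat "ltree list"

fun lab :: "ltree \<Rightarrow> nat" where
  "lab (LNode l ts) = l"

fun kids :: "ltree \<Rightarrow> ltree list" where
  "kids (LNode l ts) = ts"

text \<open>Nodes are addressed by the list of child indices on the path from the root
(the root is [], its depth is the length of the address).  addrs T lists all nodes
of T in prefix order.\<close>
lemma size_nth_kid[termination_simp]: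
  "x < length ts \<Longrightarrow> size (ts ! x) < Suc (size_list size ts)"
  using size_list_estimation'[OF nth_mem, of x ts "size (ts ! x)" size] by simp

fun addrs :: "ltree \<Rightarrow> nat list list" where
  "addrs (LNode l ts) =
     [] # concat (map (\<lambda>i. map (Cons i) (addrs (ts ! i))) [0..<length ts])"

fun subtree_at :: "ltree \<Rightarrow> nat list \<Rightarrow> ltree" where
  "subtree_at t [] = t"
| "subtree_at t (i # p) = subtree_at (kids t ! i) p"

definition lab_at :: "ltree \<Rightarrow> nat list \<Rightarrow> nat" where
  "lab_at T u = lab (subtree_at T u)"

definition edges :: "ltree \<Rightarrow> nat" where
  "edges T = length (addrs T) - 1"

text \<open>v belongs to the subtree S_u iff u is a prefix of v.  "w precedes v in
prefix order" iff w occurs before v in addrs T.\<close>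
definition sticky :: "ltree \<Rightarrow> bool" where
  "sticky T \<longleftrightarrow>
     (\<forall>u\<in>set (addrs T). lab_at T u \<le> length u) \<and>
     (\<forall>u\<in>set (addrs T). u \<noteq> [] \<longrightarrow>
        (\<exists>v\<in>set (addrs T). prefix u v \<and> lab_at T v < length u)) \<and>
     (\<forall>u\<in>set (addrs T). \<forall>v\<in>set (addrs T).
        prefix u v \<and> lab_at T v = length u \<longrightarrow>
        (\<forall>w\<in>set (takeWhile (\<lambda>x. x \<noteq> v) (addrs T)).
            prefix u w \<longrightarrow> lab_at T w \<ge> length u))"

definition sticky_trees :: "nat \<Rightarrow> ltree set" where
  "sticky_trees n = {T. sticky T \<and> edges T = n}"

definition cert :: "ltree \<Rightarrow> nat list \<Rightarrow> nat list" where
  "cert T u = hd (filter (\<lambda>v. prefix u v \<and> lab_at T v < length u) (addrs T))"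

definition cnt :: "ltree \<Rightarrow> nat list \<Rightarrow> nat" where
  "cnt T w = length (filter (\<lambda>u. u \<noteq> [] \<and> cert T u = w) (addrs T))"

datatype step = U | Dn

fun Ew :: "ltree \<Rightarrow> step list" where
  "Ew (LNode l ts) = concat (map (\<lambda>i. U # Ew (ts ! i) @ [Dn]) [0..<length ts])"

definition Dw :: "ltree \<Rightarrow> step list" where
  "Dw T = concat (map (\<lambda>v. U # replicate (cnt T v) Dn) (tl (addrs T)))"

definition dyck :: "nat \<Rightarrow> step list \<Rightarrow> bool" where
  "dyck n w \<longleftrightarrow> length w = 2 * n \<and> count_list w U = n \<and> count_list w Dn = n \<and>
     (\<forall>k \<le> length w. count_list (take k w) Dn \<le> count_list (take k w) U)"

definition balanced :: "step list \<Rightarrow> bool" where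
  "balanced w \<longleftrightarrow> count_list w U = count_list w Dn \<and>
     (\<forall>k \<le> length w. count_list (take k w) Dn \<le> count_list (take k w) U)"

text \<open>Position (0-based) of the i-th letter U (i counted from 1).\<close>
definition upos :: "step list \<Rightarrow> nat \<Rightarrow> nat" where
  "upos w i = filter (\<lambda>j. w ! j = U) [0..<length w] ! (i - 1)"

definition matchpos :: "step list \<Rightarrow> nat \<Rightarrow> nat" where
  "matchpos w p = (LEAST q. p < q \<and> q < length w \<and> w ! q = Dn \<and>
                      balanced (take (q - Suc p) (drop (Suc p) w)))"

definition ellD :: "step list \<Rightarrow> nat \<Rightarrow> nat" where
  "ellD w i = matchpos w (upos w i) - Suc (upos w i)"

definition tamari_le :: "nat \<Rightarrow> step list \<Rightarrow> step list \<Rightarrow> bool" where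
  "tamari_le n D E \<longleftrightarrow> (\<forall>i\<in>{1..n}. ellD D i \<le> ellD E i)"

definition tamari_intervals :: "nat \<Rightarrow> (step list \<times> step list) set" where
  "tamari_intervals n = {(D, E). dyck n D \<and> dyck n E \<and> tamari_le n D E}"

end

theory Submission
  imports Defs
begin


inductive bal :: "step list \<Rightarrow> bool" where
  bal_Nil: "bal []"
| bal_step: "bal x \<Longrightarrow> bal y \<Longrightarrow> bal (U # x @ Dn # y)"

lemma len_count: "length w = count_list w U + count_list w Dn"
proof (induction w)
  case (Cons a w) then show ?case by (cases a) auto
qed simp

definition pok :: "step list \<Rightarrow> bool" where
  "pok w \<longleftrightarrow> (\<forall>a b. w = a @ b \<longrightarrow> count_list a Dn \<le> count_list a U)"

lemma pok_take: "(\<forall>k \<le> length w. count_list (take k w) Dn \<le> count_list (take k w) U) \<longleftrightarrow> pok w"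
proof
  assume H: "\<forall>k \<le> length w. count_list (take k w) Dn \<le> count_list (take k w) U"
  show "pok w" unfolding pok_def
  proof (intro allI impI)
    fix a b assume "w = a @ b"
    then have "take (length a) w = a" "length a \<le> length w" by auto
    then show "count_list a Dn \<le> count_list a U" using H by metis
  qed
next
  assume "pok w"
  then show "\<forall>k \<le> length w. count_list (take k w) Dn \<le> count_list (take k w) U"
    unfolding pok_def by (metis append_take_drop_id)
qed

lemma balanced_pok: "balanced w \<longleftrightarrow> count_list w U = count_list w Dn \<and> pok w"
  unfolding balanced_def pok_take ..

lemma bal_counts: "bal w \<Longrightarrow> count_list w U = count_list w Dn"
  by (induction rule: bal.induct) auto

lemma bal_pok: "bal w \<Longrightarrow> pok w"
proof (induction rule: bal.induct)
  case bal_Nil then show ?case by (simp add: pok_def)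
next
  case (bal_step x y)
  show ?case unfolding pok_def
  proof (intro allI impI)
    fix a b assume ab: "U # x @ Dn # y = a @ b"
    show "count_list a Dn \<le> count_list a U"
    proof (cases a)
      case Nil then show ?thesis by simp
    next
      case (Cons c a')
      with ab have c: "c = U" and ab': "x @ Dn # y = a' @ b" by auto
      from ab' consider (i) "\<exists>a2. a' = x @ a2 \<and> Dn # y = a2 @ b" | (ii) "\<exists>x2. x = a' @ x2 \<and> b = x2 @ Dn # y"
        by (auto simp: append_eq_append_conv2)
      then show ?thesis
      proof cases
        case i
        then obtain a2 where a2: "a' = x @ a2" "Dn # y = a2 @ b" by blast
        show ?thesis
        proof (cases a2)
          case Nil then show ?thesis using Cons c a2 bal_counts[OF bal_step(1)] by simp
        next
          case (Cons e a3)
          with a2 have "e = Dn" "y = a3 @ b" by auto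
          with bal_step.IH(2) have "count_list a3 Dn \<le> count_list a3 U" by (auto simp: pok_def)
          then show ?thesis using Cons \<open>a = c # a'\<close> c a2 \<open>e = Dn\<close> bal_counts[OF bal_step(1)] by simp
        qed
      next
        case ii
        then obtain x2 where "x = a' @ x2" by blast
        with bal_step.IH(1) have "count_list a' Dn \<le> count_list a' U" by (auto simp: pok_def)
        then show ?thesis using Cons c by simp
      qed
    qed
  qed
qed

lemma bal_balanced: "bal w \<Longrightarrow> balanced w"
  using bal_counts bal_pok balanced_pok by blast


lemma balanced_bal: "balanced w \<Longrightarrow> bal w"
proof (induction "length w" arbitrary: w rule: less_induct)
  case less
  show ?case
  proof (cases w)
    case Nil then show ?thesis by (simp add: bal_Nil)
  next
    case (Cons c w')
    have cnt: "count_list w U = count_list w Dn" and pk: "pok w" using less.prems balanced_pok by auto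
    have "c = U"
    proof (cases c)
      case Dn
      have "w = [Dn] @ w'" using Cons Dn by simp
      then have "count_list [Dn] Dn \<le> count_list [Dn] U" using pk unfolding pok_def by blast
      then show ?thesis by simp
    qed simp
    define P where "P k \<longleftrightarrow> count_list (take k w') Dn = count_list (take k w') U + 1" for k
    have Pex: "P (length w')" using cnt Cons \<open>c = U\<close> by (simp add: P_def)
    define k0 where "k0 = (LEAST k. P k)"
    have Pk0: "P k0" unfolding k0_def by (rule LeastI, rule Pex)
    have k0le: "k0 \<le> length w'" unfolding k0_def by (rule Least_le, rule Pex)
    have k0pos: "k0 > 0" using Pk0 by (cases k0) (auto simp: P_def)
    have small: "count_list (take k w') Dn \<le> count_list (take k w') U" if "k < k0" for k
    proof -
      have "count_list (take (Suc k) w) Dn \<le> count_list (take (Suc k) w) U"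
        using pk unfolding pok_def by (metis append_take_drop_id)
      then have "count_list (take k w') Dn \<le> count_list (take k w') U + 1"
        using Cons \<open>c = U\<close> by simp
      moreover have "\<not> P k" using that unfolding k0_def using not_less_Least by blast
      ultimately show ?thesis unfolding P_def by simp
    qed
    define x where "x = take (k0 - 1) w'"
    define y where "y = drop k0 w'"
    have tk: "take k0 w' = x @ [w' ! (k0 - 1)]"
      unfolding x_def using k0pos k0le take_Suc_conv_app_nth[of "k0 - 1" w'] by simp
    have last: "w' ! (k0 - 1) = Dn"
    proof (rule ccontr)
      assume "w' ! (k0 - 1) \<noteq> Dn"
      then have "w' ! (k0 - 1) = U" by (cases "w' ! (k0 - 1)") auto
      then show False using Pk0 small[of "k0 - 1"] k0pos tk unfolding P_def x_def by simp
    qed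
    have wdec: "w = U # x @ Dn # y"
    proof -
      have "w' = take k0 w' @ drop k0 w'" by simp
      then show ?thesis using Cons \<open>c = U\<close> tk last unfolding y_def by simp
    qed
    have xc: "count_list x U = count_list x Dn" using Pk0 tk last unfolding P_def by simp
    have xp: "pok x"
      unfolding pok_def
    proof (intro allI impI)
      fix a b assume "x = a @ b"
      then have "take (length a) x = a" by simp
      moreover have "length a \<le> k0 - 1" using \<open>x = a @ b\<close> unfolding x_def by (metis le_add1 length_append length_take min.bounded_iff)
      ultimately have "take (length a) w' = a" unfolding x_def by (simp add: min_def)
      note this \<open>length a \<le> k0 - 1\<close>
      moreover have "length a < k0" using \<open>length a \<le> k0 - 1\<close> k0pos by simp
      ultimately show "count_list a Dn \<le> count_list a U" using small by metis
    qed
    have yc: "count_list y U = count_list y Dn" using cnt wdec xc by simp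
    have yp: "pok y"
      unfolding pok_def
    proof (intro allI impI)
      fix a b assume "y = a @ b"
      then have "w = (U # x @ Dn # a) @ b" using wdec by simp
      then have "count_list (U # x @ Dn # a) Dn \<le> count_list (U # x @ Dn # a) U"
        using pk unfolding pok_def by blast
      then show "count_list a Dn \<le> count_list a U" using xc by simp
    qed
    have "bal x" using less.hyps[of x] xc xp balanced_pok wdec by auto
    moreover have "bal y" using less.hyps[of y] yc yp balanced_pok wdec by auto
    ultimately show ?thesis using wdec bal_step by simp
  qed
qed

lemma balanced_iff: "balanced w \<longleftrightarrow> bal w"
  using bal_balanced balanced_bal by blast

lemma dyck_iff: "dyck n w \<longleftrightarrow> bal w \<and> count_list w U = n"
  unfolding dyck_def balanced_iff[symmetric] balanced_def using len_count[of w] by auto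



lemma filter_idx_count: "length (filter (\<lambda>j. (x @ z) ! j = c) [0..<length x]) = count_list x c"
proof (induction x arbitrary: z rule: rev_induct)
  case Nil then show ?case by simp
next
  case (snoc a x)
  have "length (filter (\<lambda>j. (x @ ([a] @ z)) ! j = c) [0..<length x]) = count_list x c"
    by (rule snoc.IH)
  then show ?case by (simp add: nth_append)
qed

lemma upos_at: "upos (x @ U # y) (count_list x U + 1) = length x"
proof -
  let ?w = "x @ U # y"
  have "[0..<length ?w] = [0..<length x] @ [length x] @ [Suc (length x)..<length ?w]"
    using upt_add_eq_append[of 0 "length x" "Suc (length y)"] upt_conv_Cons[of "length x" "length ?w"] by simp
  then have "filter (\<lambda>j. ?w ! j = U) [0..<length ?w] =
     filter (\<lambda>j. ?w ! j = U) [0..<length x] @ [length x] @ filter (\<lambda>j. ?w ! j = U) [Suc (length x)..<length ?w]"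
    by simp
  moreover have "length (filter (\<lambda>j. ?w ! j = U) [0..<length x]) = count_list x U"
    using filter_idx_count[of x "U # y" U] by simp
  ultimately show ?thesis unfolding upos_def by (simp add: nth_append)
qed

lemma matchpos_at:
  assumes "bal a"
  shows "matchpos (x @ U # a @ Dn # z) (length x) = length x + 1 + length a"
  unfolding matchpos_def
proof (rule Least_equality)
  let ?w = "x @ U # a @ Dn # z"
  show "length x < length x + 1 + length a \<and> length x + 1 + length a < length ?w \<and>
    ?w ! (length x + 1 + length a) = Dn \<and>
    balanced (take (length x + 1 + length a - Suc (length x)) (drop (Suc (length x)) ?w))"
    using assms by (simp add: nth_append balanced_iff)
next
  let ?w = "x @ U # a @ Dn # z"
  fix q assume q: "length x < q \<and> q < length ?w \<and> ?w ! q = Dn \<and>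
    balanced (take (q - Suc (length x)) (drop (Suc (length x)) ?w))"
  show "length x + 1 + length a \<le> q"
  proof (rule ccontr)
    assume "\<not> ?thesis"
    define m where "m = q - Suc (length x)"
    have m: "q = Suc (length x) + m" "m < length a" using q \<open>\<not> length x + 1 + length a \<le> q\<close> unfolding m_def by auto
    have am: "a ! m = Dn" using q m by (simp add: nth_append)
    have "balanced (take m a)" using q m by simp
    then have c1: "count_list (take m a) U = count_list (take m a) Dn" unfolding balanced_def by simp
    have "take (Suc m) a = take m a @ [Dn]" using am m by (simp add: take_Suc_conv_app_nth)
    moreover have "pok a" using assms bal_pok by blast
    ultimately have "count_list (take m a @ [Dn]) Dn \<le> count_list (take m a @ [Dn]) U"
      unfolding pok_def by (metis append_take_drop_id)
    then show False using c1 by simp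
  qed
qed

lemma ellD_at:
  assumes "bal a"
  shows "ellD (x @ U # a @ Dn # z) (count_list x U + 1) = length a"
  unfolding ellD_def using upos_at[of x "a @ Dn # z"] matchpos_at[OF assms, of x z] by simp

lemma bal_app: "bal a \<Longrightarrow> bal b \<Longrightarrow> bal (a @ b)"
  by (induction rule: bal.induct) (auto intro: bal.intros)

definition hasL :: "step list \<Rightarrow> nat list \<Rightarrow> bool" where
  "hasL w L \<longleftrightarrow> bal w \<and> length L = count_list w U \<and>
     (\<forall>x z i. i < length L \<longrightarrow> ellD (x @ w @ z) (count_list x U + i + 1) = L ! i)"

lemma hasL_Nil: "hasL [] []"
  by (simp add: hasL_def bal_Nil)

lemma hasL_wrap:
  assumes "hasL a La"
  shows "hasL (U # a @ [Dn]) (length a # La)"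
proof -
  have ba: "bal a" and la: "length La = count_list a U" using assms by (auto simp: hasL_def)
  have "bal (U # a @ [Dn])" using bal_step[OF ba bal_Nil] by simp
  moreover have "\<forall>x z i. i < length (length a # La) \<longrightarrow>
       ellD (x @ (U # a @ [Dn]) @ z) (count_list x U + i + 1) = (length a # La) ! i"
  proof (intro allI impI)
    fix x z i assume i: "i < length (length a # La)"
    show "ellD (x @ (U # a @ [Dn]) @ z) (count_list x U + i + 1) = (length a # La) ! i"
    proof (cases i)
      case 0 then show ?thesis using ellD_at[OF ba, of x z] by simp
    next
      case (Suc k)
      have H: "\<forall>x z i. i < length La \<longrightarrow> ellD (x @ a @ z) (count_list x U + i + 1) = La ! i"
        using assms unfolding hasL_def by blast
      have "ellD ((x @ [U]) @ a @ (Dn # z)) (count_list (x @ [U]) U + k + 1) = La ! k"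
        using H[rule_format, of k "x @ [U]" "Dn # z"] i Suc by simp
      then show ?thesis using Suc by simp
    qed
  qed
  ultimately show ?thesis using la unfolding hasL_def by simp
qed

lemma hasL_app:
  assumes "hasL a La" "hasL b Lb"
  shows "hasL (a @ b) (La @ Lb)"
proof -
  have ba: "bal a" "bal b" and la: "length La = count_list a U" "length Lb = count_list b U"
    using assms by (auto simp: hasL_def)
  have "bal (a @ b)"
    using ba by (rule bal_app)
  moreover have "\<forall>x z i. i < length (La @ Lb) \<longrightarrow>
       ellD (x @ (a @ b) @ z) (count_list x U + i + 1) = (La @ Lb) ! i"
  proof (intro allI impI)
    fix x z i assume i: "i < length (La @ Lb)"
    show "ellD (x @ (a @ b) @ z) (count_list x U + i + 1) = (La @ Lb) ! i"
    proof (cases "i < length La")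
      case True
      have "ellD (x @ a @ (b @ z)) (count_list x U + i + 1) = La ! i"
        using assms(1) True unfolding hasL_def by auto
      then show ?thesis using True by (simp add: nth_append)
    next
      case False
      define k where "k = i - length La"
      have k: "k < length Lb" "i = length La + k" using i False unfolding k_def by auto
      have H: "\<forall>x z i. i < length Lb \<longrightarrow> ellD (x @ b @ z) (count_list x U + i + 1) = Lb ! i"
        using assms(2) unfolding hasL_def by blast
      have "ellD ((x @ a) @ b @ z) (count_list (x @ a) U + k + 1) = Lb ! k"
        using H[rule_format, of k "x @ a" z] k by simp
      then show ?thesis using k la by (simp add: nth_append add.assoc)
    qed
  qed
  ultimately show ?thesis using la unfolding hasL_def by simp
qed

lemma hasL_concat:
  assumes "\<And>i. i < m \<Longrightarrow> hasL (W i) (L i)"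
  shows "hasL (concat (map W [0..<m])) (concat (map L [0..<m]))"
  using assms
proof (induction m)
  case 0 then show ?case by (simp add: hasL_Nil)
next
  case (Suc m) then show ?case by (simp add: hasL_app)
qed

lemma hasL_exists: "bal w \<Longrightarrow> \<exists>L. hasL w L"
proof (induction rule: bal.induct)
  case bal_Nil then show ?case using hasL_Nil by blast
next
  case (bal_step x y)
  then obtain Lx Ly where "hasL x Lx" "hasL y Ly" by blast
  then have "hasL ((U # x @ [Dn]) @ y) ((length x # Lx) @ Ly)" using hasL_wrap hasL_app by blast
  then show ?case by auto
qed

lemma hasL_ellD: "hasL w L \<Longrightarrow> i < length L \<Longrightarrow> ellD w (i + 1) = L ! i"
  unfolding hasL_def by (metis append.left_neutral append_Nil2 count_list.simps(1) add_0)

lemma hasL_unique: "hasL w L1 \<Longrightarrow> hasL w L2 \<Longrightarrow> L1 = L2"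
  by (metis hasL_def hasL_ellD nth_equalityI)

lemma hasL_len: "hasL w L \<Longrightarrow> length w = 2 * length L"
  unfolding hasL_def using len_count bal_counts by (metis mult_2)



lemma upt_split: "a \<le> m \<Longrightarrow> m \<le> b \<Longrightarrow> [a..<b] = [a..<m] @ [m..<b]"
  by (metis le_add_diff_inverse upt_add_eq_append)

definition cntf :: "(nat \<Rightarrow> nat) \<Rightarrow> nat \<Rightarrow> nat \<Rightarrow> nat \<Rightarrow> nat" where
  "cntf f a b k = length (filter (\<lambda>i. f i = k) [a..<b])"

definition Wr :: "nat \<Rightarrow> nat \<Rightarrow> (nat \<Rightarrow> nat) \<Rightarrow> step list" where
  "Wr a b f = concat (map (\<lambda>k. U # replicate (cntf f a b k) Dn) [a..<b])"

definition nest :: "nat \<Rightarrow> nat \<Rightarrow> (nat \<Rightarrow> nat) \<Rightarrow> bool" where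
  "nest a b f \<longleftrightarrow> (\<forall>i. a \<le> i \<and> i < b \<longrightarrow> i \<le> f i \<and> f i < b) \<and>
     (\<forall>i i'. a \<le> i \<and> i < b \<and> i < i' \<and> i' \<le> f i \<longrightarrow> f i' \<le> f i)"

lemma cntf_split: "a \<le> m \<Longrightarrow> m \<le> b \<Longrightarrow> cntf f a b k = cntf f a m k + cntf f m b k"
  unfolding cntf_def using upt_split[of a m b] by simp

lemma cntf_zero: "(\<And>i. m \<le> i \<Longrightarrow> i < b \<Longrightarrow> f i \<noteq> k) \<Longrightarrow> cntf f m b k = 0"
  unfolding cntf_def by (auto simp: filter_empty_conv)

lemma cntf_one: "cntf f a (Suc a) k = (if f a = k then 1 else 0)"
  unfolding cntf_def by simp

lemma cntf_cong: "(\<And>i. a \<le> i \<Longrightarrow> i < b \<Longrightarrow> f i = g i) \<Longrightarrow> cntf f a b k = cntf g a b k"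
  unfolding cntf_def by (intro arg_cong[where f=length] filter_cong) auto

lemma Wr_cong: "(\<And>i. a \<le> i \<Longrightarrow> i < b \<Longrightarrow> f i = g i) \<Longrightarrow> Wr a b f = Wr a b g"
  unfolding Wr_def using cntf_cong by metis

lemma concat_map_cong_upt:
  "(\<And>k. a \<le> k \<Longrightarrow> k < b \<Longrightarrow> F k = G k) \<Longrightarrow> concat (map F [a..<b]) = concat (map G [a..<b])"
  by (intro arg_cong[where f=concat] map_cong) auto

lemma Wr_dec:
  assumes N: "nest a b f" and ab: "a < b"
  shows "Wr a b f = U # Wr (Suc a) (Suc (f a)) f @ Dn # Wr (Suc (f a)) b f"
proof -
  define j where "j = f a"
  have aj: "a \<le> j" "j < b" using N ab unfolding nest_def j_def by auto
  have rng: "i \<le> f i" "f i < b" if "a \<le> i" "i < b" for i using N that unfolding nest_def by auto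
  have nst: "f i' \<le> f i" if "a \<le> i" "i < b" "i < i'" "i' \<le> f i" for i i' using N that unfolding nest_def by blast
  have blk1: "f i \<le> j" if "a < i" "i \<le> j" for i
    using nst[of a i] that ab unfolding j_def by simp
  have upt: "[a..<b] = a # [Suc a..<Suc j] @ [Suc j..<b]"
    using aj upt_split[of "Suc a" "Suc j" b] upt_conv_Cons[of a b] by (simp del: upt_Suc)
  have c1: "cntf f a b k = (if k = j then 1 else 0) + cntf f (Suc a) (Suc j) k" if "a < k" "k \<le> j" for k
  proof -
    have "cntf f a b k = cntf f a (Suc a) k + cntf f (Suc a) b k" using cntf_split[of a "Suc a" b] aj by simp
    also have "cntf f (Suc a) b k = cntf f (Suc a) (Suc j) k + cntf f (Suc j) b k" using cntf_split[of "Suc a" "Suc j" b] aj by simp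
    also have "cntf f (Suc j) b k = 0"
    proof (rule cntf_zero)
      fix i assume "Suc j \<le> i" "i < b"
      then show "f i \<noteq> k" using rng[of i] aj that by force
    qed
    finally show ?thesis using cntf_one j_def by simp
  qed
  have c2: "cntf f a b k = cntf f (Suc j) b k" if "j < k" for k
  proof -
    have "cntf f a b k = cntf f a (Suc a) k + cntf f (Suc a) (Suc j) k + cntf f (Suc j) b k"
      using cntf_split[of a "Suc a" b] cntf_split[of "Suc a" "Suc j" b] aj by simp
    moreover have "cntf f a (Suc a) k = 0" using cntf_one j_def that by simp
    moreover have "cntf f (Suc a) (Suc j) k = 0"
    proof (rule cntf_zero)
      fix i assume "Suc a \<le> i" "i < Suc j"
      then show "f i \<noteq> k" using blk1[of i] that by force
    qed
    ultimately show ?thesis by simp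
  qed
  have c0: "cntf f a b a = (if j = a then 1 else 0)"
  proof -
    have "cntf f a b a = cntf f a (Suc a) a + cntf f (Suc a) b a" using cntf_split[of a "Suc a" b] aj by simp
    moreover have "cntf f (Suc a) b a = 0"
    proof (rule cntf_zero)
      fix i assume "Suc a \<le> i" "i < b"
      then show "f i \<noteq> a" using rng[of i] by force
    qed
    ultimately show ?thesis using cntf_one j_def by auto
  qed
  have part2: "concat (map (\<lambda>k. U # replicate (cntf f a b k) Dn) [Suc j..<b]) = Wr (Suc j) b f"
    unfolding Wr_def by (rule concat_map_cong_upt) (simp add: c2)
  show ?thesis
  proof (cases "j = a")
    case True
    then show ?thesis using upt c0 part2 unfolding Wr_def j_def[symmetric] by simp
  next
    case False
    then have aj': "a < j" using aj by simp
    have u2: "[Suc a..<Suc j] = [Suc a..<j] @ [j]" using aj' by simp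
    have "concat (map (\<lambda>k. U # replicate (cntf f a b k) Dn) [Suc a..<j]) =
          concat (map (\<lambda>k. U # replicate (cntf f (Suc a) (Suc j) k) Dn) [Suc a..<j])"
      by (rule concat_map_cong_upt) (simp add: c1)
    moreover have "cntf f a b j = Suc (cntf f (Suc a) (Suc j) j)" using c1[of j] aj' by simp
    ultimately have part1: "concat (map (\<lambda>k. U # replicate (cntf f a b k) Dn) [Suc a..<Suc j]) =
         Wr (Suc a) (Suc j) f @ [Dn]"
      unfolding Wr_def u2 by (simp add: replicate_append_same[symmetric])
    show ?thesis using upt c0 False part1 part2 unfolding Wr_def j_def[symmetric]
      by simp
  qed
qed

lemma nest_sub1: assumes N: "nest a b f" and ab: "a < b" shows "nest (Suc a) (Suc (f a)) f"
proof -
  have rng: "i \<le> f i" "f i < b" if "a \<le> i" "i < b" for i using N that unfolding nest_def by auto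
  have nst: "f i' \<le> f i" if "a \<le> i" "i < b" "i < i'" "i' \<le> f i" for i i' using N that unfolding nest_def by blast
  have "i \<le> f i \<and> f i < Suc (f a)" if "Suc a \<le> i" "i < Suc (f a)" for i
    using rng[of i] nst[of a i] rng[of a] that ab by simp
  moreover have "f i' \<le> f i" if "Suc a \<le> i" "i < Suc (f a)" "i < i'" "i' \<le> f i" for i i'
    using nst[of i i'] rng[of a] that ab by simp
  ultimately show ?thesis unfolding nest_def by blast
qed

lemma nest_sub2: assumes N: "nest a b f" and ab: "a < b" shows "nest (Suc (f a)) b f"
proof -
  have rng: "i \<le> f i" "f i < b" if "a \<le> i" "i < b" for i using N that unfolding nest_def by auto
  have nst: "f i' \<le> f i" if "a \<le> i" "i < b" "i < i'" "i' \<le> f i" for i i' using N that unfolding nest_def by blast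
  have "a \<le> f a" using rng[of a] ab by simp
  then show ?thesis using rng nst unfolding nest_def by (meson Suc_leD order_trans)
qed

lemma Wr_hasL: "nest a b f \<Longrightarrow> hasL (Wr a b f) (map (\<lambda>i. 2 * (f i - i)) [a..<b])"
proof (induction "b - a" arbitrary: a b rule: less_induct)
  case less
  show ?case
  proof (cases "a < b")
    case False
    then show ?thesis by (simp add: Wr_def hasL_Nil)
  next
    case True
    define j where "j = f a"
    have aj: "a \<le> j" "j < b" using less.prems True unfolding nest_def j_def by auto
    have h1: "hasL (Wr (Suc a) (Suc j) f) (map (\<lambda>i. 2 * (f i - i)) [Suc a..<Suc j])"
      using less.hyps[of "Suc j" "Suc a"] nest_sub1[OF less.prems True] aj True unfolding j_def by simp
    have h2: "hasL (Wr (Suc j) b f) (map (\<lambda>i. 2 * (f i - i)) [Suc j..<b])"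
      using less.hyps[of b "Suc j"] nest_sub2[OF less.prems True] aj True unfolding j_def by simp
    have len: "length (Wr (Suc a) (Suc j) f) = 2 * (j - a)" using hasL_len[OF h1] by (simp del: upt_Suc)
    have "hasL ((U # Wr (Suc a) (Suc j) f @ [Dn]) @ Wr (Suc j) b f)
        ((2 * (j - a) # map (\<lambda>i. 2 * (f i - i)) [Suc a..<Suc j]) @ map (\<lambda>i. 2 * (f i - i)) [Suc j..<b])"
      using hasL_app[OF hasL_wrap[OF h1] h2] len by simp
    moreover have "[a..<b] = a # [Suc a..<Suc j] @ [Suc j..<b]"
      using aj upt_split[of "Suc a" "Suc j" b] upt_conv_Cons[of a b] by (simp del: upt_Suc)
    ultimately show ?thesis using Wr_dec[OF less.prems True] unfolding j_def by simp
  qed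
qed

lemma nest_join:
  assumes "nest (Suc a) (Suc j) f" "nest (Suc j) b f" "f a = j" "a \<le> j" "j < b"
  shows "nest a b f"
proof -
  have r1: "i \<le> f i" "f i < Suc j" if "Suc a \<le> i" "i < Suc j" for i using assms(1) that unfolding nest_def by auto
  have n1: "f i' \<le> f i" if "Suc a \<le> i" "i < Suc j" "i < i'" "i' \<le> f i" for i i' using assms(1) that unfolding nest_def by blast
  have r2: "i \<le> f i" "f i < b" if "Suc j \<le> i" "i < b" for i using assms(2) that unfolding nest_def by auto
  have n2: "f i' \<le> f i" if "Suc j \<le> i" "i < b" "i < i'" "i' \<le> f i" for i i' using assms(2) that unfolding nest_def by blast
  have R: "i \<le> f i \<and> f i < b" if "a \<le> i" "i < b" for i
  proof (cases "i = a")
    case True then show ?thesis using assms by simp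
  next
    case False
    then show ?thesis using r1[of i] r2[of i] that assms(5) by (cases "i \<le> j") auto
  qed
  have M: "f i' \<le> f i" if "a \<le> i" "i < b" "i < i'" "i' \<le> f i" for i i'
  proof (cases "i = a")
    case True
    then have "Suc a \<le> i'" "i' < Suc j" using that assms(3) by auto
    then show ?thesis using r1[of i'] True assms(3) by simp
  next
    case False
    show ?thesis
    proof (cases "i \<le> j")
      case True
      then show ?thesis using n1[of i i'] that False by simp
    next
      case F2: False
      then show ?thesis using n2[of i i'] that by simp
    qed
  qed
  show ?thesis unfolding nest_def using R M by blast
qed

lemma nest_cong:
  assumes "\<And>i. a \<le> i \<Longrightarrow> i < b \<Longrightarrow> g i = f i" "nest a b f"
  shows "nest a b g"
proof -
  have rng: "i \<le> f i" "f i < b" if "a \<le> i" "i < b" for i using assms(2) that unfolding nest_def by auto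
  have nst: "f i' \<le> f i" if "a \<le> i" "i < b" "i < i'" "i' \<le> f i" for i i' using assms(2) that unfolding nest_def by blast
  have "i \<le> g i \<and> g i < b" if "a \<le> i" "i < b" for i using rng[of i] assms(1)[of i] that by simp
  moreover have "g i' \<le> g i" if "a \<le> i" "i < b" "i < i'" "i' \<le> g i" for i i'
    using nst[of i i'] assms(1)[of i] assms(1)[of i'] rng[of i] that by simp
  ultimately show ?thesis unfolding nest_def by blast
qed

lemma Wr_recon:
  "bal D \<Longrightarrow> hasL D L \<Longrightarrow> nest a (a + length L) (\<lambda>i. i + L ! (i - a) div 2) \<and>
      D = Wr a (a + length L) (\<lambda>i. i + L ! (i - a) div 2)"
proof (induction arbitrary: L a rule: bal.induct)
  case bal_Nil
  then have "L = []" using hasL_unique hasL_Nil by blast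
  then show ?case by (simp add: nest_def Wr_def)
next
  case (bal_step x y)
  obtain Lx Ly where hx: "hasL x Lx" and hy: "hasL y Ly" using bal_step.hyps hasL_exists by blast
  have "hasL ((U # x @ [Dn]) @ y) ((length x # Lx) @ Ly)" using hasL_wrap[OF hx] hy hasL_app by blast
  then have L: "L = (length x # Lx) @ Ly" using bal_step.prems hasL_unique by simp
  have lx: "length x = 2 * length Lx" using hasL_len[OF hx] .
  define g where "g = (\<lambda>i. i + L ! (i - a) div 2)"
  define j where "j = a + length Lx"
  define b where "b = a + length L"
  have gj: "g a = j" unfolding g_def j_def using L lx by simp
  have bj: "b = Suc j + length Ly" unfolding b_def j_def using L by simp
  have gx: "g i = i + Lx ! (i - Suc a) div 2" if "Suc a \<le> i" "i < Suc j" for i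
    using that L unfolding g_def j_def by (simp add: nth_append Suc_diff_le)
  have gy: "g i = i + Ly ! (i - Suc j) div 2" if "Suc j \<le> i" for i
  proof -
    have "i - a = Suc (length Lx + (i - Suc j))" using that unfolding j_def by simp
    then show ?thesis using L unfolding g_def by (simp add: nth_append)
  qed
  have IHx: "nest (Suc a) (Suc a + length Lx) (\<lambda>i. i + Lx ! (i - Suc a) div 2) \<and>
      x = Wr (Suc a) (Suc a + length Lx) (\<lambda>i. i + Lx ! (i - Suc a) div 2)"
    using bal_step.IH(1) hx by blast
  have IHy: "nest (Suc j) (Suc j + length Ly) (\<lambda>i. i + Ly ! (i - Suc j) div 2) \<and>
      y = Wr (Suc j) (Suc j + length Ly) (\<lambda>i. i + Ly ! (i - Suc j) div 2)"
    using bal_step.IH(2) hy by blast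
  have eqx: "Wr (Suc a) (Suc j) g = x"
  proof -
    have "Wr (Suc a) (Suc j) g = Wr (Suc a) (Suc j) (\<lambda>i. i + Lx ! (i - Suc a) div 2)"
      by (rule Wr_cong) (simp add: gx)
    then show ?thesis using IHx unfolding j_def by simp
  qed
  have eqy: "Wr (Suc j) b g = y"
  proof -
    have "Wr (Suc j) b g = Wr (Suc j) b (\<lambda>i. i + Ly ! (i - Suc j) div 2)"
      by (rule Wr_cong) (simp add: gy)
    then show ?thesis using IHy bj by simp
  qed
  have nx: "nest (Suc a) (Suc j) g"
  proof -
    have A: "nest (Suc a) (Suc j) (\<lambda>i. i + Lx ! (i - Suc a) div 2)" using IHx unfolding j_def by simp
    show ?thesis by (rule nest_cong[OF _ A]) (simp add: gx)
  qed
  have ny: "nest (Suc j) b g"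
  proof -
    have A: "nest (Suc j) b (\<lambda>i. i + Ly ! (i - Suc j) div 2)" using IHy bj by simp
    show ?thesis by (rule nest_cong[OF _ A]) (simp add: gy)
  qed
  have N: "nest a b g" using nest_join[OF nx ny gj] bj unfolding j_def by simp
  have ab: "a < b" using bj unfolding j_def by simp
  have "Wr a b g = U # x @ Dn # y" using Wr_dec[OF N ab] gj eqx eqy by simp
  then show ?case using N unfolding g_def b_def by simp
qed



lemma map_upt_nth: "map (\<lambda>i. f (xs ! i)) [0..<length xs] = map f xs"
  by (rule nth_equalityI) auto

lemma Ew_alt: "Ew (LNode l ts) = concat (map (\<lambda>t. U # Ew t @ [Dn]) ts)"
  using map_upt_nth[of "\<lambda>t. U # Ew t @ [Dn]" ts] by simp

lemma addrs_hd: "addrs t = [] # tl (addrs t)"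
  by (cases t) simp

lemma addrs_ne[simp]: "addrs t \<noteq> []"
  by (cases t) simp

abbreviation nd :: "ltree \<Rightarrow> nat" where "nd t \<equiv> length (addrs t)"

lemma hasL_tree: "hasL (Ew t) (map (\<lambda>u. 2 * (nd (subtree_at t u) - 1)) (tl (addrs t)))"
proof (induction t)
  case (LNode l ts)
  define m where "m = length ts"
  have IH: "hasL (Ew (ts ! i)) (map (\<lambda>u. 2 * (nd (subtree_at (ts ! i) u) - 1)) (tl (addrs (ts ! i))))"
    if "i < m" for i using LNode that unfolding m_def by simp
  have len: "length (Ew (ts ! i)) = 2 * (nd (ts ! i) - 1)" if "i < m" for i
    using hasL_len[OF IH[OF that]] by simp
  have E: "Ew (LNode l ts) = concat (map (\<lambda>i. U # Ew (ts ! i) @ [Dn]) [0..<m])"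
    unfolding m_def by simp
  have "map (\<lambda>u. 2 * (nd (subtree_at (LNode l ts) u) - 1)) (tl (addrs (LNode l ts)))
     = concat (map (\<lambda>i. map (\<lambda>p. 2 * (nd (subtree_at (ts ! i) p) - 1)) (addrs (ts ! i))) [0..<m])"
    unfolding m_def by (simp add: map_concat comp_def)
  also have "\<dots> = concat (map (\<lambda>i. 2 * (nd (ts ! i) - 1) #
       map (\<lambda>p. 2 * (nd (subtree_at (ts ! i) p) - 1)) (tl (addrs (ts ! i)))) [0..<m])"
    by (rule concat_map_cong_upt) (subst addrs_hd, simp)
  finally have L: "map (\<lambda>u. 2 * (nd (subtree_at (LNode l ts) u) - 1)) (tl (addrs (LNode l ts))) = \<dots>" .
  show ?case unfolding E L
    by (rule hasL_concat) (metis IH hasL_wrap len)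
qed

lemma Ew_bal: "bal (Ew t)"
  using hasL_tree unfolding hasL_def by blast

lemma Ew_countU: "count_list (Ew t) U = nd t - 1"
  using hasL_tree[of t] unfolding hasL_def by simp

lemma forest_exists: "bal w \<Longrightarrow> \<exists>ts. concat (map (\<lambda>t. U # Ew t @ [Dn]) ts) = w"
proof (induction rule: bal.induct)
  case bal_Nil then show ?case by (rule exI[of _ "[]"]) simp
next
  case (bal_step x y)
  then obtain tx ty where "concat (map (\<lambda>t. U # Ew t @ [Dn]) tx) = x"
    "concat (map (\<lambda>t. U # Ew t @ [Dn]) ty) = y" by blast
  then show ?case by (intro exI[of _ "LNode 0 tx # ty"]) (simp add: Ew_alt del: Ew.simps)
qed

lemma tree_exists: "bal w \<Longrightarrow> \<exists>t. Ew t = w"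
  using forest_exists Ew_alt by metis

lemma bal_first_unique:
  assumes "bal a" "bal a'" "a @ Dn # b = a' @ Dn # b'"
  shows "a = a' \<and> b = b'"
proof -
  have key: False if "bal a" "bal a'" "a @ Dn # b = a' @ Dn # b'" "length a < length a'" for a a' b b'
  proof -
    from that(3) obtain us where "(a = a' @ us \<and> us @ Dn # b = Dn # b') \<or> (a @ us = a' \<and> Dn # b = us @ Dn # b')"
      by (auto simp: append_eq_append_conv2)
    then have "a' = a @ us" "Dn # b = us @ Dn # b'" using that(4) by auto
    moreover have "us \<noteq> []" using that(4) \<open>a' = a @ us\<close> by auto
    ultimately obtain c where "a' = a @ Dn # c" by (cases us) auto
    moreover have "pok a'" using bal_pok[OF that(2)] .
    ultimately have "count_list (a @ [Dn]) Dn \<le> count_list (a @ [Dn]) U"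
      unfolding pok_def by (metis append.assoc append_Cons append_Nil)
    then show False using bal_counts[OF that(1)] by simp
  qed
  have "length a = length a'"
    using key[OF assms] key[OF assms(2,1) assms(3)[symmetric]] by (meson linorder_neqE_nat)
  then show ?thesis using assms(3) by simp
qed

fun relabel :: "ltree \<Rightarrow> (nat list \<Rightarrow> nat) \<Rightarrow> ltree" where
  "relabel (LNode l ts) g = LNode (g []) (map (\<lambda>i. relabel (ts ! i) (\<lambda>p. g (i # p))) [0..<length ts])"

lemma addrs_relabel[simp]: "addrs (relabel t g) = addrs t"
proof (induction t arbitrary: g)
  case (LNode l ts) then show ?case by (auto intro!: arg_cong[where f=concat])
qed

lemma Ew_relabel[simp]: "Ew (relabel t g) = Ew t"
proof (induction t arbitrary: g)
  case (LNode l ts) then show ?case by (auto intro!: arg_cong[where f=concat])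
qed

lemma lab_at_relabel: "u \<in> set (addrs t) \<Longrightarrow> lab_at (relabel t g) u = g u"
proof (induction u arbitrary: t g)
  case Nil then show ?case by (cases t) (simp add: lab_at_def)
next
  case (Cons i p)
  obtain l ts where t: "t = LNode l ts" by (cases t)
  with Cons.prems have i: "i < length ts" and p: "p \<in> set (addrs (ts ! i))" by auto
  have "lab_at (relabel (ts ! i) (\<lambda>q. g (i # q))) p = g (i # p)" using Cons.IH[OF p] by simp
  then show ?case using t i by (simp add: lab_at_def)
qed

lemma relabel_self: "relabel t (lab_at t) = t"
proof (induction t)
  case (LNode l ts)
  have "map (\<lambda>i. relabel (ts ! i) (\<lambda>p. lab_at (LNode l ts) (i # p))) [0..<length ts] = ts"
  proof (rule nth_equalityI)
    fix i assume "i < length (map (\<lambda>i. relabel (ts ! i) (\<lambda>p. lab_at (LNode l ts) (i # p))) [0..<length ts])"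
    then have i: "i < length ts" by simp
    have "(\<lambda>p. lab_at (LNode l ts) (i # p)) = lab_at (ts ! i)" by (auto simp: lab_at_def)
    then show "map (\<lambda>i. relabel (ts ! i) (\<lambda>p. lab_at (LNode l ts) (i # p))) [0..<length ts] ! i = ts ! i"
      using i LNode by simp
  qed simp
  then show ?case by (simp add: lab_at_def)
qed

lemma addrs_Cons_mem: "i < length ts \<Longrightarrow> p \<in> set (addrs (ts ! i)) \<Longrightarrow> i # p \<in> set (addrs (LNode l ts))"
  by auto

lemma relabel_cong: "(\<And>u. u \<in> set (addrs t) \<Longrightarrow> g1 u = g2 u) \<Longrightarrow> relabel t g1 = relabel t g2"
proof (induction t arbitrary: g1 g2)
  case (LNode l ts)
  have "relabel (ts ! i) (\<lambda>p. g1 (i # p)) = relabel (ts ! i) (\<lambda>p. g2 (i # p))" if "i < length ts" for i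
    by (rule LNode.IH[OF nth_mem[OF that]]) (rule LNode.prems, rule addrs_Cons_mem[OF that])
  moreover have "g1 [] = g2 []" using LNode.prems by simp
  ultimately show ?case by (simp del: upt_Suc)
qed

lemma relabel_relabel: "relabel (relabel t g1) g2 = relabel t g2"
proof (induction t arbitrary: g1 g2)
  case (LNode l ts) then show ?case by simp
qed

definition strip :: "ltree \<Rightarrow> ltree" where "strip t = relabel t (\<lambda>_. 0)"

lemma strip_LNode: "strip (LNode l ts) = LNode 0 (map strip ts)"
  unfolding strip_def using map_upt_nth[of "\<lambda>t. relabel t (\<lambda>_. 0)" ts] by simp

lemma Ew_inj_strip: "Ew s1 = Ew s2 \<Longrightarrow> strip s1 = strip s2"
proof (induction s1 arbitrary: s2)
  case (LNode l1 ts1)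
  obtain l2 ts2 where s2: "s2 = LNode l2 ts2" by (cases s2)
  have "concat (map (\<lambda>t. U # Ew t @ [Dn]) ts1) = concat (map (\<lambda>t. U # Ew t @ [Dn]) ts2)"
    using LNode.prems s2 Ew_alt by metis
  moreover have "\<forall>ts2. concat (map (\<lambda>t. U # Ew t @ [Dn]) ts1) = concat (map (\<lambda>t. U # Ew t @ [Dn]) ts2)
     \<longrightarrow> map strip ts1 = map strip ts2"
    using LNode.IH
  proof (induction ts1)
    case Nil
    show ?case
    proof (intro allI impI)
      fix ts2 :: "ltree list"
      assume "concat (map (\<lambda>t. U # Ew t @ [Dn]) []) = concat (map (\<lambda>t. U # Ew t @ [Dn]) ts2)"
      then show "map strip [] = map strip ts2" by (cases ts2) auto
    qed
  next
    case (Cons t r)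
    show ?case
    proof (intro allI impI)
      fix ts2 assume eq: "concat (map (\<lambda>t. U # Ew t @ [Dn]) (t # r)) = concat (map (\<lambda>t. U # Ew t @ [Dn]) ts2)"
      then obtain t' r' where ts2: "ts2 = t' # r'" by (cases ts2) auto
      have "Ew t @ Dn # concat (map (\<lambda>t. U # Ew t @ [Dn]) r) = Ew t' @ Dn # concat (map (\<lambda>t. U # Ew t @ [Dn]) r')"
        using eq ts2 by simp
      then have e: "Ew t = Ew t'" and rr: "concat (map (\<lambda>t. U # Ew t @ [Dn]) r) = concat (map (\<lambda>t. U # Ew t @ [Dn]) r')"
        using bal_first_unique[OF Ew_bal Ew_bal] by blast+
      have "strip t = strip t'" using Cons.prems e by simp
      moreover have "map strip r = map strip r'" using Cons.IH Cons.prems rr by simp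
      ultimately show "map strip (t # r) = map strip ts2" using ts2 by simp
    qed
  qed
  ultimately show ?case using s2 by (simp add: strip_LNode)
qed

lemma Ew_inj_eq:
  assumes "Ew s1 = Ew s2" "\<And>u. u \<in> set (addrs s1) \<Longrightarrow> lab_at s1 u = lab_at s2 u"
  shows "s1 = s2"
proof -
  have st: "strip s1 = strip s2" using Ew_inj_strip[OF assms(1)] .
  then have a: "addrs s1 = addrs s2" unfolding strip_def by (metis addrs_relabel)
  have "s1 = relabel s1 (lab_at s1)" using relabel_self by simp
  also have "\<dots> = relabel s1 (lab_at s2)" by (rule relabel_cong) (simp add: assms(2))
  also have "\<dots> = relabel (strip s1) (lab_at s2)"
    unfolding strip_def by (simp add: relabel_relabel)
  also have "\<dots> = relabel (strip s2) (lab_at s2)" using st by simp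
  also have "\<dots> = s2" unfolding strip_def by (simp add: relabel_relabel relabel_self)
  finally show ?thesis .
qed



lemma addrs_mem: "u \<in> set (addrs (LNode l ts)) \<longleftrightarrow>
   u = [] \<or> (\<exists>i p. u = i # p \<and> i < length ts \<and> p \<in> set (addrs (ts ! i)))"
  by auto

lemma distinct_concat_Cons:
  "(\<And>i. i < m \<Longrightarrow> distinct (X i)) \<Longrightarrow> distinct (concat (map (\<lambda>i. map (Cons i) (X i)) [0..<m]))"
proof (induction m)
  case 0 then show ?case by simp
next
  case (Suc m)
  have "distinct (concat (map (\<lambda>i. map (Cons i) (X i)) [0..<m]))" using Suc by simp
  moreover have "distinct (map (Cons m) (X m))" using Suc.prems by (simp add: distinct_map)
  moreover have "set (concat (map (\<lambda>i. map (Cons i) (X i)) [0..<m])) \<inter> set (map (Cons m) (X m)) = {}"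
    by auto
  ultimately show ?case by simp
qed

lemma distinct_addrs: "distinct (addrs t)"
proof (induction t)
  case (LNode l ts)
  have "distinct (concat (map (\<lambda>i. map (Cons i) (addrs (ts ! i))) [0..<length ts]))"
    by (rule distinct_concat_Cons) (simp add: LNode)
  then show ?case by auto
qed

lemma addrs_prefix_closed: "u \<in> set (addrs t) \<Longrightarrow> prefix v u \<Longrightarrow> v \<in> set (addrs t)"
proof (induction u arbitrary: t v)
  case Nil then show ?case by (cases t) simp
next
  case (Cons i p)
  obtain l ts where t: "t = LNode l ts" by (cases t)
  with Cons.prems have i: "i < length ts" and p: "p \<in> set (addrs (ts ! i))" by auto
  show ?case
  proof (cases v)
    case Nil then show ?thesis using t by simp
  next
    case (Cons j v')
    with Cons.prems(2) \<open>v = j # v'\<close> have "j = i" "prefix v' p" by auto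
    then have "v' \<in> set (addrs (ts ! i))" using Cons.IH p by blast
    then show ?thesis using t i \<open>v = j # v'\<close> \<open>j = i\<close> addrs_Cons_mem by blast
  qed
qed

lemma addrs_block:
  "u \<in> set (addrs t) \<Longrightarrow> \<exists>P Q. addrs t = P @ map ((@) u) (addrs (subtree_at t u)) @ Q \<and>
     (\<forall>v \<in> set P. \<not> prefix u v) \<and> (\<forall>v \<in> set Q. \<not> prefix u v)"
proof (induction u arbitrary: t)
  case Nil
  show ?case by (rule exI[of _ "[]"], rule exI[of _ "[]"]) simp
next
  case (Cons i p)
  obtain l ts where t: "t = LNode l ts" by (cases t)
  with Cons.prems have i: "i < length ts" and p: "p \<in> set (addrs (ts ! i))" by auto
  obtain P' Q' where PQ': "addrs (ts ! i) = P' @ map ((@) p) (addrs (subtree_at (ts ! i) p)) @ Q'"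
    "\<forall>v \<in> set P'. \<not> prefix p v" "\<forall>v \<in> set Q'. \<not> prefix p v"
    using Cons.IH[OF p] by blast
  define F where "F k = map (Cons k) (addrs (ts ! k))" for k
  have upt: "[0..<length ts] = [0..<i] @ i # [Suc i..<length ts]"
    using i upt_split[of 0 i "length ts"] upt_conv_Cons[of i "length ts"] by (simp del: upt_Suc)
  have A: "addrs t = [] # concat (map F [0..<i]) @ F i @ concat (map F [Suc i..<length ts])"
    using t upt unfolding F_def by simp
  have Fi: "F i = map (Cons i) P' @ map ((@) (i # p)) (addrs (subtree_at t (i # p))) @ map (Cons i) Q'"
    unfolding F_def using PQ'(1) t by simp
  define P where "P = [] # concat (map F [0..<i]) @ map (Cons i) P'"
  define Q where "Q = map (Cons i) Q' @ concat (map F [Suc i..<length ts])"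
  have "addrs t = P @ map ((@) (i # p)) (addrs (subtree_at t (i # p))) @ Q"
    unfolding P_def Q_def A Fi by simp
  moreover have "\<forall>v \<in> set P. \<not> prefix (i # p) v"
    unfolding P_def F_def using PQ'(2) by auto
  moreover have "\<forall>v \<in> set Q. \<not> prefix (i # p) v"
    unfolding Q_def F_def using PQ'(3) by auto
  ultimately show ?case by blast
qed

definition pos :: "ltree \<Rightarrow> nat list \<Rightarrow> nat" where
  "pos t v = length (takeWhile (\<lambda>x. x \<noteq> v) (addrs t))"

lemma pos_lt: "v \<in> set (addrs t) \<Longrightarrow> pos t v < nd t"
  unfolding pos_def
proof (rule ccontr)
  assume v: "v \<in> set (addrs t)" and "\<not> length (takeWhile (\<lambda>x. x \<noteq> v) (addrs t)) < nd t"
  then have "length (takeWhile (\<lambda>x. x \<noteq> v) (addrs t)) = nd t"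
    using length_takeWhile_le[of "\<lambda>x. x \<noteq> v" "addrs t"] by linarith
  then have "takeWhile (\<lambda>x. x \<noteq> v) (addrs t) = addrs t" by (metis takeWhile_eq_take take_all order_refl)
  then have "\<forall>x \<in> set (addrs t). x \<noteq> v" by (simp only: takeWhile_eq_all_conv)
  then show False using v by blast
qed

lemma nth_pos: "v \<in> set (addrs t) \<Longrightarrow> addrs t ! pos t v = v"
  using nth_length_takeWhile[of "\<lambda>x. x \<noteq> v" "addrs t"] pos_lt[of v t] unfolding pos_def by simp

lemma pos_nth: "k < nd t \<Longrightarrow> pos t (addrs t ! k) = k"
proof -
  assume k: "k < nd t"
  have m: "addrs t ! k \<in> set (addrs t)" using k by simp
  have "addrs t ! pos t (addrs t ! k) = addrs t ! k" using nth_pos[OF m] .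
  then show ?thesis using distinct_addrs[of t] pos_lt[OF m] k nth_eq_iff_index_eq by blast
qed

lemma pos_inj: "v \<in> set (addrs t) \<Longrightarrow> w \<in> set (addrs t) \<Longrightarrow> pos t v = pos t w \<Longrightarrow> v = w"
  using nth_pos by metis

lemma mem_takeWhile_pos:
  assumes "v \<in> set (addrs t)"
  shows "w \<in> set (takeWhile (\<lambda>x. x \<noteq> v) (addrs t)) \<longleftrightarrow> w \<in> set (addrs t) \<and> pos t w < pos t v"
proof -
  have tw: "takeWhile (\<lambda>x. x \<noteq> v) (addrs t) = take (pos t v) (addrs t)"
    unfolding pos_def by (rule takeWhile_eq_take)
  show ?thesis
  proof
    assume "w \<in> set (takeWhile (\<lambda>x. x \<noteq> v) (addrs t))"
    then obtain k where k0: "k < length (take (pos t v) (addrs t))" "take (pos t v) (addrs t) ! k = w"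
      unfolding tw by (metis in_set_conv_nth)
    then have k: "k < pos t v" "k < nd t" "w = addrs t ! k" by auto
    then show "w \<in> set (addrs t) \<and> pos t w < pos t v" using pos_nth by auto
  next
    assume w: "w \<in> set (addrs t) \<and> pos t w < pos t v"
    then have "w = take (pos t v) (addrs t) ! pos t w" using nth_pos by simp
    moreover have "pos t w < length (take (pos t v) (addrs t))" using w pos_lt[OF assms] by simp
    ultimately show "w \<in> set (takeWhile (\<lambda>x. x \<noteq> v) (addrs t))" unfolding tw using nth_mem by metis
  qed
qed

lemma sub_iff:
  assumes u: "u \<in> set (addrs t)" and v: "v \<in> set (addrs t)"
  shows "prefix u v \<longleftrightarrow> pos t u \<le> pos t v \<and> pos t v < pos t u + nd (subtree_at t u)"
proof -
  obtain P Q where PQ: "addrs t = P @ map ((@) u) (addrs (subtree_at t u)) @ Q"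
     "\<forall>v \<in> set P. \<not> prefix u v" "\<forall>v \<in> set Q. \<not> prefix u v"
    using addrs_block[OF u] by blast
  define B where "B = map ((@) u) (addrs (subtree_at t u))"
  have lB: "length B = nd (subtree_at t u)" unfolding B_def by simp
  have B0: "B ! 0 = u" unfolding B_def by (subst addrs_hd) simp
  have lt: "length P < nd t" using PQ(1) addrs_ne[of "subtree_at t u"] by (metis B_def PQ(1) length_append length_greater_0_conv less_add_same_cancel1 add.assoc length_map trans_less_add1)
  have "addrs t ! length P = u" using PQ(1) B0 addrs_ne[of "subtree_at t u"] unfolding B_def by (simp add: nth_append)
  then have pu: "pos t u = length P" using pos_nth[OF lt] by simp
  define k where "k = pos t v"
  have kv: "addrs t ! k = v" "k < nd t" unfolding k_def using nth_pos[OF v] pos_lt[OF v] by auto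
  have "prefix u v \<longleftrightarrow> length P \<le> k \<and> k < length P + length B"
  proof
    assume pv: "prefix u v"
    show "length P \<le> k \<and> k < length P + length B"
    proof (rule ccontr)
      assume "\<not> ?thesis"
      then consider "k < length P" | "length P + length B \<le> k" by linarith
      then show False
      proof cases
        case 1
        then have "v \<in> set P" using kv PQ(1) by (metis nth_append nth_mem)
        then show False using PQ(2) pv by blast
      next
        case 2
        then have "v = Q ! (k - length P - length B)" using kv PQ(1) unfolding B_def[symmetric]
          by (simp add: nth_append split: if_splits)
        moreover have "k - length P - length B < length Q" using kv(2) PQ(1) 2 unfolding B_def[symmetric] by simp
        ultimately have "v \<in> set Q" by simp
        then show False using PQ(3) pv by blast
      qed
    qed
  next
    assume r: "length P \<le> k \<and> k < length P + length B"
    then have "v = B ! (k - length P)" using kv PQ(1) unfolding B_def[symmetric] by (simp add: nth_append split: if_splits)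
    then show "prefix u v" using r unfolding B_def by auto
  qed
  then show ?thesis using pu lB unfolding k_def by simp
qed

lemma prefix_pos_le: "u \<in> set (addrs t) \<Longrightarrow> v \<in> set (addrs t) \<Longrightarrow> prefix u v \<Longrightarrow> pos t u \<le> pos t v"
  using sub_iff by blast

lemma prefix_pos_lt: "u \<in> set (addrs t) \<Longrightarrow> v \<in> set (addrs t) \<Longrightarrow> prefix u v \<Longrightarrow> u \<noteq> v \<Longrightarrow> pos t u < pos t v"
  using prefix_pos_le pos_inj by (metis le_neq_implies_less)

lemma pos_root: "pos t [] = 0"
  unfolding pos_def by (subst addrs_hd) simp



lemma hd_filter_first:
  assumes "x \<in> set xs" "P x"
  shows "hd (filter P xs) \<in> set xs \<and> P (hd (filter P xs)) \<and>
    length (takeWhile (\<lambda>y. y \<noteq> hd (filter P xs)) xs) \<le> length (takeWhile (\<lambda>y. y \<noteq> x) xs)"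
  using assms
proof (induction xs)
  case Nil then show ?case by simp
next
  case (Cons a r)
  show ?case
  proof (cases "P a")
    case True then show ?thesis by simp
  next
    case False
    then have xa: "x \<noteq> a" "x \<in> set r" using Cons.prems by auto
    have IH: "hd (filter P r) \<in> set r \<and> P (hd (filter P r)) \<and>
      length (takeWhile (\<lambda>y. y \<noteq> hd (filter P r)) r) \<le> length (takeWhile (\<lambda>y. y \<noteq> x) r)"
      using Cons.IH xa Cons.prems by blast
    then have "a \<noteq> hd (filter P r)" using False by blast
    then show ?thesis using IH False xa by simp
  qed
qed

lemma hd_filter_pos:
  assumes "x \<in> set (addrs t)" "P x"
  shows "hd (filter P (addrs t)) \<in> set (addrs t) \<and> P (hd (filter P (addrs t))) \<and>
    pos t (hd (filter P (addrs t))) \<le> pos t x"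
  using hd_filter_first[of x "addrs t" P, OF assms] unfolding pos_def by blast

lemma prefix_take_len: "prefix u w \<Longrightarrow> take (length u) w = u"
  by (auto simp: prefix_def)

lemma prefix_take_mono: "prefix u v \<Longrightarrow> length u \<le> d \<Longrightarrow> prefix u (take d v)"
  by (auto simp: prefix_def)

lemma take_prefix: "prefix (take d w) w"
  by (rule take_is_prefix)

definition labf :: "ltree \<Rightarrow> (nat list \<Rightarrow> nat list) \<Rightarrow> nat list \<Rightarrow> nat" where
  "labf t F w = Max (insert 0 {d. 1 \<le> d \<and> d \<le> length w \<and> pos t w < pos t (F (take d w))})"

lemma labf_finite: "finite {d. 1 \<le> d \<and> d \<le> length w \<and> pos t w < pos t (F (take d w))}"
  by (rule finite_subset[of _ "{..length w}"]) auto

lemma labf_ge: "1 \<le> d \<Longrightarrow> d \<le> length w \<Longrightarrow> pos t w < pos t (F (take d w)) \<Longrightarrow> d \<le> labf t F w"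
  unfolding labf_def by (rule Max_ge) (auto simp: labf_finite)

lemma labf_le: "labf t F w \<le> length w"
  unfolding labf_def by (rule Max.boundedI) (auto simp: labf_finite)

lemma labf_in: "labf t F w \<noteq> 0 \<Longrightarrow> 1 \<le> labf t F w \<and> labf t F w \<le> length w \<and>
   pos t w < pos t (F (take (labf t F w) w))"
proof -
  assume ne: "labf t F w \<noteq> 0"
  have "labf t F w \<in> insert 0 {d. 1 \<le> d \<and> d \<le> length w \<and> pos t w < pos t (F (take d w))}"
    unfolding labf_def by (rule Max_in) (auto simp: labf_finite)
  then show ?thesis using ne by auto
qed

section \<open>Forward direction\<close>

locale stk =
  fixes S :: ltree
  assumes st: "sticky S"
begin

abbreviation "A \<equiv> set (addrs S)"

lemma c1: "u \<in> A \<Longrightarrow> lab_at S u \<le> length u"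
  using st unfolding sticky_def by blast

lemma c2: "u \<in> A \<Longrightarrow> u \<noteq> [] \<Longrightarrow> \<exists>v\<in>A. prefix u v \<and> lab_at S v < length u"
  using st unfolding sticky_def by blast

lemma c3: "u \<in> A \<Longrightarrow> v \<in> A \<Longrightarrow> prefix u v \<Longrightarrow> lab_at S v = length u \<Longrightarrow>
   w \<in> set (takeWhile (\<lambda>x. x \<noteq> v) (addrs S)) \<Longrightarrow> prefix u w \<Longrightarrow> lab_at S w \<ge> length u"
  using st unfolding sticky_def by blast

lemma cert_props:
  assumes "u \<in> A" "u \<noteq> []"
  shows "cert S u \<in> A" "prefix u (cert S u)" "lab_at S (cert S u) < length u"
    "\<And>w. w \<in> A \<Longrightarrow> prefix u w \<Longrightarrow> lab_at S w < length u \<Longrightarrow> pos S (cert S u) \<le> pos S w"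
proof -
  obtain v where v: "v \<in> A" "prefix u v" "lab_at S v < length u" using c2[OF assms] by blast
  note H = hd_filter_pos[of v S "\<lambda>v. prefix u v \<and> lab_at S v < length u", OF v(1)]
  show "cert S u \<in> A" "prefix u (cert S u)" "lab_at S (cert S u) < length u"
    using H v unfolding cert_def by auto
  fix w assume "w \<in> A" "prefix u w" "lab_at S w < length u"
  then show "pos S (cert S u) \<le> pos S w"
    using hd_filter_pos[of w S "\<lambda>v. prefix u v \<and> lab_at S v < length u"] unfolding cert_def by auto
qed

lemma cert_in_sub:
  assumes "u \<in> A" "u \<noteq> []"
  shows "pos S u \<le> pos S (cert S u)" "pos S (cert S u) < pos S u + nd (subtree_at S u)"
  using sub_iff[OF assms(1) cert_props(1)[OF assms]] cert_props(2)[OF assms] by auto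

lemma cert_nested:
  assumes u: "u \<in> A" "u \<noteq> []" and u': "u' \<in> A" "u' \<noteq> []"
    and lt: "pos S u < pos S u'" "pos S u' \<le> pos S (cert S u)"
  shows "pos S (cert S u') \<le> pos S (cert S u)"
proof -
  define c where "c = cert S u"
  have cA: "c \<in> A" and pc: "prefix u c" and lc: "lab_at S c < length u"
    using cert_props[OF u] unfolding c_def by auto
  have "pos S c < pos S u + nd (subtree_at S u)" using cert_in_sub[OF u] unfolding c_def by simp
  then have "prefix u u'" using sub_iff[OF u(1) u'(1)] lt unfolding c_def by simp
  moreover have "u \<noteq> u'" using lt by auto
  ultimately have "length u < length u'" by (simp add: prefix_length_less prefix_order.le_less)
  show ?thesis
  proof (cases "prefix u' c")
    case True
    then show ?thesis using cert_props(4)[OF u' cA] lc \<open>length u < length u'\<close> unfolding c_def by simp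
  next
    case False
    then have "pos S u' + nd (subtree_at S u') \<le> pos S c"
      using sub_iff[OF u'(1) cA] lt unfolding c_def by simp
    then show ?thesis using cert_in_sub(2)[OF u'] unfolding c_def by simp
  qed
qed

lemma lab_formula:
  assumes w: "w \<in> A"
  shows "lab_at S w = labf S (cert S) w"
proof (rule antisym)
  show "labf S (cert S) w \<le> lab_at S w"
    unfolding labf_def
  proof (rule Max.boundedI)
    show "finite (insert 0 {d. 1 \<le> d \<and> d \<le> length w \<and> pos S w < pos S (cert S (take d w))})"
      by (simp add: labf_finite)
  next
    fix d assume "d \<in> insert 0 {d. 1 \<le> d \<and> d \<le> length w \<and> pos S w < pos S (cert S (take d w))}"
    then consider "d = 0" | "1 \<le> d" "d \<le> length w" "pos S w < pos S (cert S (take d w))" by blast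
    then show "d \<le> lab_at S w"
    proof cases
      case 2
      define u where "u = take d w"
      have uA: "u \<in> A" using addrs_prefix_closed[OF w take_prefix] unfolding u_def by blast
      have lu: "length u = d" using 2 unfolding u_def by simp
      have un: "u \<noteq> []" using lu 2 by auto
      show ?thesis
      proof (rule ccontr)
        assume "\<not> d \<le> lab_at S w"
        then have "pos S (cert S u) \<le> pos S w"
          using cert_props(4)[OF uA un w] take_prefix[of d w] lu unfolding u_def[symmetric] by simp
        then show False using 2 unfolding u_def by simp
      qed
    qed simp
  qed simp
next
  show "lab_at S w \<le> labf S (cert S) w"
  proof (cases "lab_at S w = 0")
    case False
    define d where "d = lab_at S w"
    have d: "1 \<le> d" "d \<le> length w" using False c1[OF w] unfolding d_def by auto
    define u where "u = take d w"
    have uA: "u \<in> A" using addrs_prefix_closed[OF w take_prefix] unfolding u_def by blast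
    have lu: "length u = d" using d unfolding u_def by simp
    have un: "u \<noteq> []" using lu d by auto
    have pu: "prefix u w" unfolding u_def by (rule take_prefix)
    define c where "c = cert S u"
    have cA: "c \<in> A" and pc: "prefix u c" and lc: "lab_at S c < d"
      using cert_props[OF uA un] lu unfolding c_def by auto
    have "pos S w < pos S c"
    proof (rule ccontr)
      assume "\<not> ?thesis"
      then consider "pos S c < pos S w" | "pos S c = pos S w" by linarith
      then show False
      proof cases
        case 1
        then have "c \<in> set (takeWhile (\<lambda>x. x \<noteq> w) (addrs S))" using mem_takeWhile_pos[OF w] cA by blast
        then have "lab_at S c \<ge> length u" using c3[OF uA w pu] lu d_def pc by simp
        then show False using lc lu by simp
      next
        case 2
        then have "c = w" using pos_inj cA w by blast
        then show False using lc d_def by simp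
      qed
    qed
    then show ?thesis using labf_ge[OF d] unfolding c_def u_def d_def by simp
  qed simp
qed

end

section \<open>Backward direction\<close>

definition adm :: "ltree \<Rightarrow> (nat list \<Rightarrow> nat list) \<Rightarrow> bool" where
  "adm T F \<longleftrightarrow> (\<forall>u \<in> set (addrs T). u \<noteq> [] \<longrightarrow> F u \<in> set (addrs T) \<and> prefix u (F u) \<and>
     (\<forall>u' \<in> set (addrs T). u' \<noteq> [] \<and> pos T u < pos T u' \<and> pos T u' \<le> pos T (F u) \<longrightarrow>
        pos T (F u') \<le> pos T (F u)))"

lemma pos_relabel[simp]: "pos (relabel t g) = pos t"
  unfolding pos_def[abs_def] by simp

lemma sticky_adm: "sticky S \<Longrightarrow> adm S (cert S)"
  unfolding adm_def using stk.cert_props stk.cert_nested unfolding stk_def by blast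

locale bwd =
  fixes T :: ltree and F :: "nat list \<Rightarrow> nat list"
  assumes ad: "adm T F"
begin

abbreviation "A \<equiv> set (addrs T)"
abbreviation "g \<equiv> labf T F"
abbreviation "S \<equiv> relabel T g"

lemma F_in: "u \<in> A \<Longrightarrow> u \<noteq> [] \<Longrightarrow> F u \<in> A" using ad unfolding adm_def by blast
lemma F_pre: "u \<in> A \<Longrightarrow> u \<noteq> [] \<Longrightarrow> prefix u (F u)" using ad unfolding adm_def by blast
lemma F_nest: "u \<in> A \<Longrightarrow> u \<noteq> [] \<Longrightarrow> u' \<in> A \<Longrightarrow> u' \<noteq> [] \<Longrightarrow> pos T u < pos T u' \<Longrightarrow>
   pos T u' \<le> pos T (F u) \<Longrightarrow> pos T (F u') \<le> pos T (F u)"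
  using ad unfolding adm_def by blast

lemma alpha: assumes u: "u \<in> A" "u \<noteq> []" shows "g (F u) < length u"
proof -
  define v where "v = F u"
  have vA: "v \<in> A" and pv: "prefix u v" using F_in[OF u] F_pre[OF u] unfolding v_def by auto
  have "d < length u" if d: "1 \<le> d" "d \<le> length v" "pos T v < pos T (F (take d v))" for d
  proof (rule ccontr)
    assume "\<not> d < length u"
    define u' where "u' = take d v"
    have u'A: "u' \<in> A" using addrs_prefix_closed[OF vA take_prefix] unfolding u'_def by blast
    have lu': "length u' = d" using d unfolding u'_def by simp
    have pu': "prefix u u'" using prefix_take_mono[OF pv] \<open>\<not> d < length u\<close> unfolding u'_def by simp
    show False
    proof (cases "d = length u")
      case True
      then have "u' = u" using prefix_take_len[OF pu'] lu' by simp
      then show False using d(3) unfolding u'_def v_def by simp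
    next
      case False
      then have "u \<noteq> u'" using lu' by auto
      then have "pos T u < pos T u'" using prefix_pos_lt[OF u(1) u'A pu'] by simp
      moreover have "pos T u' \<le> pos T v" using prefix_pos_le[OF u'A vA] take_prefix[of d v] unfolding u'_def by blast
      moreover have "u' \<noteq> []" using lu' d by auto
      ultimately have "pos T (F u') \<le> pos T v" using F_nest[OF u u'A] unfolding v_def by simp
      then show False using d(3) unfolding u'_def by simp
    qed
  qed
  moreover have "0 < length u" using u by simp
  ultimately show ?thesis unfolding labf_def v_def
    by (subst Max_less_iff) (auto simp: labf_finite)
qed

lemma beta: assumes u: "u \<in> A" "u \<noteq> []" and w: "w \<in> A" "prefix u w" "pos T w < pos T (F u)"
  shows "length u \<le> g w"
proof -
  have "take (length u) w = u" using prefix_take_len[OF w(2)] .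
  then show ?thesis using labf_ge[of "length u" w T F] u w prefix_length_le[OF w(2)]
    by (simp add: Suc_le_eq)
qed

lemma lab_S: "w \<in> A \<Longrightarrow> lab_at S w = g w"
  by (rule lab_at_relabel)

lemma cert_S: assumes u: "u \<in> A" "u \<noteq> []" shows "cert S u = F u"
proof -
  define P where "P = (\<lambda>v. prefix u v \<and> lab_at S v < length u)"
  have PF: "P (F u)" unfolding P_def using F_pre[OF u] alpha[OF u] lab_S F_in[OF u] by simp
  have H: "hd (filter P (addrs S)) \<in> set (addrs S) \<and> P (hd (filter P (addrs S))) \<and>
    pos S (hd (filter P (addrs S))) \<le> pos S (F u)"
    by (rule hd_filter_pos) (use F_in[OF u] PF in simp_all)
  define y where "y = hd (filter P (addrs S))"
  have yA: "y \<in> A" and Py: "P y" and py: "pos T y \<le> pos T (F u)" using H unfolding y_def by auto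
  have "pos T y = pos T (F u)"
  proof (rule ccontr)
    assume "pos T y \<noteq> pos T (F u)"
    then have "pos T y < pos T (F u)" using py by simp
    then have "length u \<le> g y" using beta[OF u yA] Py unfolding P_def by simp
    then show False using Py lab_S[OF yA] unfolding P_def by simp
  qed
  then have "y = F u" using pos_inj yA F_in[OF u] by blast
  then show ?thesis unfolding cert_def y_def P_def by simp
qed

lemma sticky_S: "sticky S"
  unfolding sticky_def addrs_relabel
proof (intro conjI ballI impI allI)
  fix u assume "u \<in> A"
  then show "lab_at S u \<le> length u" using lab_S labf_le by simp
next
  fix u assume u: "u \<in> A" "u \<noteq> []"
  show "\<exists>v\<in>A. prefix u v \<and> lab_at S v < length u"
    using F_in[OF u] F_pre[OF u] alpha[OF u] lab_S[OF F_in[OF u]] by auto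
next
  fix u v w assume uA: "u \<in> A" and vA: "v \<in> A" and puv: "prefix u v \<and> lab_at S v = length u"
    and wt: "w \<in> set (takeWhile (\<lambda>x. x \<noteq> v) (addrs T))" and pw: "prefix u w"
  show "length u \<le> lab_at S w"
  proof (cases "u = []")
    case False
    have gv: "g v = length u" using puv lab_S[OF vA] by simp
    then have "g v \<noteq> 0" using False by simp
    then have "pos T v < pos T (F (take (length u) v))" using labf_in[of T F v] gv by simp
    moreover have "take (length u) v = u" using prefix_take_len puv by blast
    ultimately have "pos T v < pos T (F u)" by simp
    moreover have wA: "w \<in> A" and "pos T w < pos T v" using mem_takeWhile_pos[OF vA] wt by auto
    ultimately have "length u \<le> g w" using beta[OF uA False wA pw] by simp
    then show ?thesis using lab_S[OF wA] by simp
  qed simp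
qed

end



definition fS :: "ltree \<Rightarrow> nat \<Rightarrow> nat" where
  "fS S i = pos S (cert S (addrs S ! Suc i)) - 1"

lemma nd_edges: "nd t = Suc (edges t)"
  unfolding edges_def using addrs_ne[of t] by (cases "addrs t") auto

lemma pos_addrs: "addrs s1 = addrs s2 \<Longrightarrow> pos s1 = pos s2"
  unfolding pos_def[abs_def] by simp

lemma nonroot_nth:
  assumes "i < edges t"
  shows "addrs t ! Suc i \<in> set (addrs t)" "addrs t ! Suc i \<noteq> []" "pos t (addrs t ! Suc i) = Suc i"
proof -
  have l: "Suc i < nd t" using assms nd_edges by simp
  show m: "addrs t ! Suc i \<in> set (addrs t)" using l by simp
  show p: "pos t (addrs t ! Suc i) = Suc i" using pos_nth[OF l] .
  show "addrs t ! Suc i \<noteq> []" using p pos_root by force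
qed

lemma nonroot_pos:
  assumes "u \<in> set (addrs t)" "u \<noteq> []"
  shows "\<exists>k < edges t. u = addrs t ! Suc k"
proof -
  have "pos t u \<noteq> 0" using assms pos_root pos_inj[OF assms(1), of "[]"] by (metis addrs_hd list.set_intros(1))
  then obtain k where k: "pos t u = Suc k" by (cases "pos t u") auto
  have "k < edges t" using pos_lt[OF assms(1)] k nd_edges by simp
  moreover have "u = addrs t ! Suc k" using nth_pos[OF assms(1)] k by simp
  ultimately show ?thesis by blast
qed

lemma tl_addrs: "tl (addrs t) = map (\<lambda>j. addrs t ! Suc j) [0..<edges t]"
  by (rule nth_equalityI) (auto simp: edges_def nth_tl)

context stk
begin

lemma fS_props:
  assumes "i < edges S"
  shows "i \<le> fS S i" "fS S i < edges S" "pos S (cert S (addrs S ! Suc i)) = Suc (fS S i)"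
proof -
  note nr = nonroot_nth[OF assms]
  have a: "Suc i \<le> pos S (cert S (addrs S ! Suc i))" using cert_in_sub(1)[OF nr(1,2)] nr(3) by simp
  have b: "pos S (cert S (addrs S ! Suc i)) < Suc (edges S)"
    using pos_lt[OF cert_props(1)[OF nr(1,2)]] nd_edges by simp
  show "i \<le> fS S i" "fS S i < edges S" "pos S (cert S (addrs S ! Suc i)) = Suc (fS S i)"
    using a b unfolding fS_def by auto
qed

lemma fS_nest: "nest 0 (edges S) (fS S)"
proof -
  have R: "i \<le> fS S i \<and> fS S i < edges S" if "i < edges S" for i using fS_props that by simp
  have M: "fS S i' \<le> fS S i" if h: "i < edges S" "i < i'" "i' \<le> fS S i" for i i'
  proof -
    have i': "i' < edges S" using fS_props(2)[OF h(1)] h by simp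
    note n1 = nonroot_nth[OF h(1)] and n2 = nonroot_nth[OF i']
    have "pos S (cert S (addrs S ! Suc i')) \<le> pos S (cert S (addrs S ! Suc i))"
      using cert_nested[OF n1(1,2) n2(1,2)] n1(3) n2(3) h fS_props(3)[OF h(1)] by simp
    then show "fS S i' \<le> fS S i" using fS_props(3)[OF h(1)] fS_props(3)[OF i'] by simp
  qed
  show ?thesis unfolding nest_def using R M by blast
qed

lemma Dw_Wr: "Dw S = Wr 0 (edges S) (fS S)"
proof -
  have cnt_eq: "cnt S (addrs S ! Suc j) = cntf (fS S) 0 (edges S) j" if j: "j < edges S" for j
  proof -
    have A: "addrs S = [] # map (\<lambda>i. addrs S ! Suc i) [0..<edges S]"
      using addrs_hd[of S] tl_addrs[of S] by simp
    have "cnt S (addrs S ! Suc j) =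
        length (filter (\<lambda>u. u \<noteq> [] \<and> cert S u = addrs S ! Suc j) (map (\<lambda>i. addrs S ! Suc i) [0..<edges S]))"
      unfolding cnt_def by (subst A) simp
    also have "\<dots> = length (filter (\<lambda>i. addrs S ! Suc i \<noteq> [] \<and> cert S (addrs S ! Suc i) = addrs S ! Suc j) [0..<edges S])"
      by (simp add: filter_map comp_def)
    also have "\<dots> = length (filter (\<lambda>i. fS S i = j) [0..<edges S])"
    proof (rule arg_cong[where f=length], rule filter_cong)
      fix i assume "i \<in> set [0..<edges S]"
      then have i: "i < edges S" by simp
      note ni = nonroot_nth[OF i]
      have cA: "cert S (addrs S ! Suc i) \<in> set (addrs S)" using cert_props(1)[OF ni(1,2)] .
      have "cert S (addrs S ! Suc i) = addrs S ! Suc j \<longleftrightarrow> fS S i = j"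
      proof
        assume "cert S (addrs S ! Suc i) = addrs S ! Suc j"
        then show "fS S i = j" using fS_props(3)[OF i] nonroot_nth(3)[OF j] by simp
      next
        assume "fS S i = j"
        then have "pos S (cert S (addrs S ! Suc i)) = pos S (addrs S ! Suc j)"
          using fS_props(3)[OF i] nonroot_nth(3)[OF j] by simp
        then show "cert S (addrs S ! Suc i) = addrs S ! Suc j" using pos_inj cA nonroot_nth(1)[OF j] by blast
      qed
      then show "(addrs S ! Suc i \<noteq> [] \<and> cert S (addrs S ! Suc i) = addrs S ! Suc j) = (fS S i = j)"
        using ni(2) by simp
    qed simp
    finally show ?thesis unfolding cntf_def .
  qed
  have "Dw S = concat (map (\<lambda>j. U # replicate (cnt S (addrs S ! Suc j)) Dn) [0..<edges S])"
    unfolding Dw_def tl_addrs by (simp add: comp_def)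
  also have "\<dots> = Wr 0 (edges S) (fS S)"
    unfolding Wr_def by (rule concat_map_cong_upt) (simp add: cnt_eq)
  finally show ?thesis .
qed

lemma Dw_hasL: "hasL (Dw S) (map (\<lambda>i. 2 * (fS S i - i)) [0..<edges S])"
  using Wr_hasL[OF fS_nest] Dw_Wr by simp

lemma in_intervals: "(Dw S, Ew S) \<in> tamari_intervals (edges S)"
proof -
  let ?n = "edges S"
  let ?LD = "map (\<lambda>i. 2 * (fS S i - i)) [0..<?n]"
  let ?LE = "map (\<lambda>u. 2 * (nd (subtree_at S u) - 1)) (tl (addrs S))"
  have hD: "hasL (Dw S) ?LD" by (rule Dw_hasL)
  have hE: "hasL (Ew S) ?LE" by (rule hasL_tree)
  have dD: "dyck ?n (Dw S)" using hD unfolding dyck_iff hasL_def by simp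
  have dE: "dyck ?n (Ew S)" using Ew_bal Ew_countU nd_edges unfolding dyck_iff by simp
  have "ellD (Dw S) i \<le> ellD (Ew S) i" if i: "i \<in> {1..?n}" for i
  proof -
    obtain k where k: "i = k + 1" "k < ?n" using i by (cases i) auto
    have e1: "ellD (Dw S) i = 2 * (fS S k - k)" using hasL_ellD[OF hD, of k] k by simp
    have e2: "ellD (Ew S) i = 2 * (nd (subtree_at S (addrs S ! Suc k)) - 1)"
      using hasL_ellD[OF hE, of k] k by (simp add: tl_addrs)
    note nk = nonroot_nth[OF k(2)]
    have "pos S (cert S (addrs S ! Suc k)) < pos S (addrs S ! Suc k) + nd (subtree_at S (addrs S ! Suc k))"
      using cert_in_sub(2)[OF nk(1,2)] .
    then have "fS S k - k \<le> nd (subtree_at S (addrs S ! Suc k)) - 1"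
      using fS_props(3)[OF k(2)] nk(3) by simp
    then show ?thesis using e1 e2 by simp
  qed
  then show ?thesis using dD dE unfolding tamari_intervals_def tamari_le_def by simp
qed

end

lemma injective:
  assumes s1: "sticky S1" and s2: "sticky S2" and e: "edges S1 = edges S2"
    and D: "Dw S1 = Dw S2" and E: "Ew S1 = Ew S2"
  shows "S1 = S2"
proof -
  interpret a: stk S1 using s1 by unfold_locales
  interpret b: stk S2 using s2 by unfold_locales
  have ad: "addrs S1 = addrs S2" using Ew_inj_strip[OF E] unfolding strip_def by (metis addrs_relabel)
  have ps: "pos S1 = pos S2" using pos_addrs[OF ad] .
  have "map (\<lambda>i. 2 * (fS S1 i - i)) [0..<edges S1] = map (\<lambda>i. 2 * (fS S2 i - i)) [0..<edges S2]"
  proof -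
    have "hasL (Dw S1) (map (\<lambda>i. 2 * (fS S2 i - i)) [0..<edges S2])" using b.Dw_hasL D by simp
    then show ?thesis using hasL_unique[OF a.Dw_hasL] by blast
  qed
  note mm = this
  have ff: "fS S1 i = fS S2 i" if i: "i < edges S1" for i
  proof -
    have "map (\<lambda>i. 2 * (fS S1 i - i)) [0..<edges S1] ! i = map (\<lambda>i. 2 * (fS S2 i - i)) [0..<edges S2] ! i"
      using mm by simp
    then have "2 * (fS S1 i - i) = 2 * (fS S2 i - i)" using i e by simp
    moreover have "i \<le> fS S1 i" "i \<le> fS S2 i" using a.fS_props(1)[OF i] b.fS_props(1)[of i] i e by auto
    ultimately show ?thesis by simp
  qed
  have cc: "cert S1 u = cert S2 u" if u: "u \<in> set (addrs S1)" "u \<noteq> []" for u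
  proof -
    obtain k where k: "k < edges S1" "u = addrs S1 ! Suc k" using nonroot_pos[OF u] by blast
    have k2: "k < edges S2" "u = addrs S2 ! Suc k" using k e ad by auto
    have "pos S1 (cert S1 u) = pos S2 (cert S2 u)"
      using a.fS_props(3)[OF k(1)] b.fS_props(3)[OF k2(1)] ff[OF k(1)] k k2 by simp
    then show ?thesis using ps pos_inj a.cert_props(1)[OF u] b.cert_props(1)[of u] u ad by metis
  qed
  have "lab_at S1 w = lab_at S2 w" if w: "w \<in> set (addrs S1)" for w
  proof -
    have w2: "w \<in> set (addrs S2)" using w ad by simp
    have "{d. 1 \<le> d \<and> d \<le> length w \<and> pos S1 w < pos S1 (cert S1 (take d w))} =
          {d. 1 \<le> d \<and> d \<le> length w \<and> pos S2 w < pos S2 (cert S2 (take d w))}"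
    proof (rule Collect_cong)
      fix d
      show "(1 \<le> d \<and> d \<le> length w \<and> pos S1 w < pos S1 (cert S1 (take d w))) =
            (1 \<le> d \<and> d \<le> length w \<and> pos S2 w < pos S2 (cert S2 (take d w)))"
      proof (cases "1 \<le> d \<and> d \<le> length w")
        case True
        have "take d w \<in> set (addrs S1)" using addrs_prefix_closed[OF w take_prefix] by blast
        moreover have "take d w \<noteq> []" using True by auto
        ultimately have "cert S1 (take d w) = cert S2 (take d w)" using cc by blast
        then show ?thesis using ps by simp
      qed blast
    qed
    then show ?thesis using a.lab_formula[OF w] b.lab_formula[OF w2] unfolding labf_def by simp
  qed
  then show ?thesis using Ew_inj_eq[OF E] by blast
qed

lemma surjective:
  assumes "(D, E) \<in> tamari_intervals n"
  shows "\<exists>S. sticky S \<and> edges S = n \<and> Dw S = D \<and> Ew S = E"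
proof -
  have dD: "bal D" "count_list D U = n" and dE: "bal E" "count_list E U = n"
    and tl: "\<And>i. i \<in> {1..n} \<Longrightarrow> ellD D i \<le> ellD E i"
    using assms unfolding tamari_intervals_def tamari_le_def dyck_iff by auto
  obtain T0 where T0: "Ew T0 = E" using tree_exists[OF dE(1)] by blast
  have eT: "edges T0 = n" using Ew_countU[of T0] T0 dE(2) nd_edges[of T0] by simp
  obtain LD where LD: "hasL D LD" using hasL_exists[OF dD(1)] by blast
  have lLD: "length LD = n" using LD dD(2) unfolding hasL_def by simp
  define f where "f = (\<lambda>i. i + LD ! i div 2)"
  have R: "nest 0 n f \<and> D = Wr 0 n f" using Wr_recon[OF dD(1) LD, of 0] lLD unfolding f_def by simp
  then have N: "nest 0 n f" and DW: "D = Wr 0 n f" by auto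
  have fr: "k \<le> f k" "f k < n" if "k < n" for k using N that unfolding nest_def by auto
  have fn: "f k' \<le> f k" if "k < n" "k < k'" "k' \<le> f k" for k k' using N that unfolding nest_def by blast
  have LD2: "LD = map (\<lambda>i. 2 * (f i - i)) [0..<n]"
    using hasL_unique[OF LD] Wr_hasL[OF N] DW by simp
  have tam: "Suc (f k) < Suc k + nd (subtree_at T0 (addrs T0 ! Suc k))" if k: "k < n" for k
  proof -
    have "ellD D (k + 1) \<le> ellD E (k + 1)" using tl[of "k+1"] k by simp
    moreover have "ellD D (k + 1) = 2 * (f k - k)" using hasL_ellD[OF LD, of k] LD2 k by simp
    moreover have "ellD E (k + 1) = 2 * (nd (subtree_at T0 (addrs T0 ! Suc k)) - 1)"
      using hasL_ellD[OF hasL_tree[of T0], of k] k eT T0 by (simp add: tl_addrs)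
    moreover have "nd (subtree_at T0 (addrs T0 ! Suc k)) \<ge> 1" using addrs_ne
      by (metis One_nat_def Suc_leI length_greater_0_conv)
    ultimately show ?thesis using fr[OF k] by simp
  qed
  define F where "F u = addrs T0 ! Suc (f (pos T0 u - 1))" for u
  have Fk: "F (addrs T0 ! Suc k) = addrs T0 ! Suc (f k)" if "k < n" for k
    using nonroot_nth(3)[of k T0] that eT unfolding F_def by simp
  have ad: "adm T0 F"
    unfolding adm_def
  proof (rule ballI, rule impI, intro conjI)
    fix u assume u: "u \<in> set (addrs T0)" "u \<noteq> []"
    obtain k where k: "k < n" "u = addrs T0 ! Suc k" using nonroot_pos[OF u] eT by blast
    note nk = nonroot_nth[of k T0, unfolded eT, OF k(1)]
    note nf = nonroot_nth[of "f k" T0, unfolded eT, OF fr(2)[OF k(1)]]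
    show FA: "F u \<in> set (addrs T0)" using Fk k nf(1) by simp
    have pF: "pos T0 (F u) = Suc (f k)" using Fk k nf(3) by simp
    show "prefix u (F u)" using sub_iff[OF u(1) FA] pF k nk(3) tam[OF k(1)] fr[OF k(1)] by simp
    show "\<forall>u'\<in>set (addrs T0). u' \<noteq> [] \<and> pos T0 u < pos T0 u' \<and> pos T0 u' \<le> pos T0 (F u) \<longrightarrow>
           pos T0 (F u') \<le> pos T0 (F u)"
    proof (intro ballI impI)
      fix u' assume u'A: "u' \<in> set (addrs T0)" and h: "u' \<noteq> [] \<and> pos T0 u < pos T0 u' \<and> pos T0 u' \<le> pos T0 (F u)"
      obtain k' where k': "k' < n" "u' = addrs T0 ! Suc k'" using nonroot_pos[OF u'A] h eT by blast
      have pk': "pos T0 u' = Suc k'" using nonroot_nth(3)[of k' T0] k' eT by simp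
      have "f k' \<le> f k" using fn[OF k(1)] h pk' pF k nk(3) by simp
      moreover have "pos T0 (F u') = Suc (f k')"
        using Fk k' nonroot_nth(3)[of "f k'" T0] fr(2)[OF k'(1)] eT by simp
      ultimately show "pos T0 (F u') \<le> pos T0 (F u)" using pF by simp
    qed
  qed
  interpret B: bwd T0 F using ad by unfold_locales
  define S where "S = relabel T0 (labf T0 F)"
  have stS: "sticky S" unfolding S_def by (rule B.sticky_S)
  interpret stk S using stS by unfold_locales
  have aS: "addrs S = addrs T0" unfolding S_def by simp
  have eS: "edges S = n" using eT aS unfolding edges_def by simp
  have EwS: "Ew S = E" unfolding S_def using T0 by simp
  have fSf: "fS S i = f i" if i: "i < n" for i
  proof -
    note ni = nonroot_nth[of i T0, unfolded eT, OF i]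
    have "cert S (addrs T0 ! Suc i) = F (addrs T0 ! Suc i)" unfolding S_def using B.cert_S ni by blast
    then have "cert S (addrs S ! Suc i) = addrs T0 ! Suc (f i)" using Fk[OF i] aS by simp
    moreover have "pos S = pos T0" using pos_addrs[OF aS] .
    ultimately show ?thesis unfolding fS_def using nonroot_nth(3)[of "f i" T0] fr(2)[OF i] eT by simp
  qed
  have "Dw S = D" using Dw_Wr eS DW Wr_cong[of 0 n "fS S" f] fSf by simp
  then show ?thesis using stS eS EwS by blast
qed

theorem mainTheorem11:
  fixes n :: nat
  assumes "n \<ge> 1"
  shows "bij_betw (\<lambda>S. (Dw S, Ew S)) (sticky_trees n) (tamari_intervals n)"
  unfolding bij_betw_def
proof (intro conjI)
  show "inj_on (\<lambda>S. (Dw S, Ew S)) (sticky_trees n)"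
    by (rule inj_onI) (auto simp: sticky_trees_def intro: injective)
  show "(\<lambda>S. (Dw S, Ew S)) ` sticky_trees n = tamari_intervals n"
  proof
    show "(\<lambda>S. (Dw S, Ew S)) ` sticky_trees n \<subseteq> tamari_intervals n"
      using stk.in_intervals unfolding sticky_trees_def stk_def by auto
    show "tamari_intervals n \<subseteq> (\<lambda>S. (Dw S, Ew S)) ` sticky_trees n"
    proof
      fix p assume "p \<in> tamari_intervals n"
      then obtain D E where p: "p = (D, E)" "(D, E) \<in> tamari_intervals n" by (cases p) auto
      then obtain S where "sticky S \<and> edges S = n \<and> Dw S = D \<and> Ew S = E" using surjective by blast
      then show "p \<in> (\<lambda>S. (Dw S, Ew S)) ` sticky_trees n" using p unfolding sticky_trees_def by force
    qed
  qed
qed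


end
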